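(* Let $P=b_0+b_1x_1+\dots+b_nx_n\in M_N(\mathbb{C}\langle x_1,\dots,x_n\rangle)$ with $b_0,\dots,b_n\in M_N(\mathbb{C})$. Then: (1) $\sigma^{\mathrm{full}}_{\mathbb{C}\langle x_1,\dots,x_n\rangle}(P)\subseteq\sigma(b_0)$, the set of eigenvalues of $b_0$; (2) if $b_1x_1+\dots+b_nx_n$ is full over $\mathbb{C}\langle x_1,\dots,x_n\rangle$, then $\sigma^{\mathrm{full}}_{\mathbb{C}\langle x_1,\dots,x_n\rangle}(P)=\emptyset$.
   Context: Inner rank: for $0\ne A\in M_{m,k}(\mathcal{B})$ over a unital algebra $\mathcal{B}$, $\rho(A)$ is the least $r$ with $A=CD$, $C\in M_{m,r}(\mathcal{B}),D\in M_{r,k}(\mathcal{B})$; $A$ is full if $\rho(A)=\min\{m,k\}$. For $A\in M_N(\mathcal{B})$, $\sigma^{\mathrm{full}}_{\mathcal{B}}(A)$ is the set of $\lambda\in\mathbb{C}$ such that $A-\lambda1_N$ is not full over $\mathcal{B}$. *)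

theory Defs
  imports Complex_Main "HOL-Library.Function_Algebras" "Jordan_Normal_Form.Char_Poly"
begin

text \<open>The free algebra C<x_0,...,x_{n-1}> of noncommutative polynomials in n variables.\<close>

type_synonym ncpoly = "nat list \<Rightarrow> complex"

definition nc_poly_set :: "nat \<Rightarrow> ncpoly set" where
  "nc_poly_set n = {f. finite {w. f w \<noteq> 0} \<and> (\<forall>w. f w \<noteq> 0 \<longrightarrow> set w \<subseteq> {..<n})}"

definition nc_mult :: "ncpoly \<Rightarrow> ncpoly \<Rightarrow> ncpoly" where
  "nc_mult f g = (\<lambda>w. \<Sum>i\<le>length w. f (take i w) * g (drop i w))"

definition nc_const :: "complex \<Rightarrow> ncpoly" where
  "nc_const c = (\<lambda>w. if w = [] then c else 0)"

definition nc_var :: "nat \<Rightarrow> ncpoly" where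
  "nc_var l = (\<lambda>w. if w = [l] then 1 else 0)"

definition nc_smult :: "complex \<Rightarrow> ncpoly \<Rightarrow> ncpoly" where
  "nc_smult c f = (\<lambda>w. c * f w)"

type_synonym ncmat = "nat \<Rightarrow> nat \<Rightarrow> ncpoly"

definition nc_mat_set :: "nat \<Rightarrow> nat \<Rightarrow> nat \<Rightarrow> ncmat set" where
  "nc_mat_set n m k = {A. \<forall>i<m. \<forall>j<k. A i j \<in> nc_poly_set n}"

definition nc_mat_mult :: "nat \<Rightarrow> ncmat \<Rightarrow> ncmat \<Rightarrow> ncmat" where
  "nc_mat_mult r C D = (\<lambda>i j. \<Sum>l<r. nc_mult (C i l) (D l j))"

definition nc_inner_rank :: "nat \<Rightarrow> nat \<Rightarrow> nat \<Rightarrow> ncmat \<Rightarrow> nat" where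
  "nc_inner_rank n m k A = (LEAST r. \<exists>C D. C \<in> nc_mat_set n m r \<and> D \<in> nc_mat_set n r k \<and>
       (\<forall>i<m. \<forall>j<k. A i j = nc_mat_mult r C D i j))"

definition nc_full :: "nat \<Rightarrow> nat \<Rightarrow> nat \<Rightarrow> ncmat \<Rightarrow> bool" where
  "nc_full n m k A \<longleftrightarrow> nc_inner_rank n m k A = min m k"

definition nc_full_spectrum :: "nat \<Rightarrow> nat \<Rightarrow> ncmat \<Rightarrow> complex set" where
  "nc_full_spectrum n N A =
     {z. \<not> nc_full n N N (\<lambda>i j. A i j - (if i = j then nc_const z else 0))}"

definition nc_pencil :: "nat \<Rightarrow> complex mat \<Rightarrow> (nat \<Rightarrow> complex mat) \<Rightarrow> ncmat" where
  "nc_pencil n b0 b = (\<lambda>i j. nc_const (b0 $$ (i, j)) + (\<Sum>l<n. nc_smult (b l $$ (i, j)) (nc_var l)))"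

definition nc_hom_part :: "nat \<Rightarrow> (nat \<Rightarrow> complex mat) \<Rightarrow> ncmat" where
  "nc_hom_part n b = (\<lambda>i j. \<Sum>l<n. nc_smult (b l $$ (i, j)) (nc_var l))"

end

theory Submission
  imports Defs
begin

lemma sum_fun_apply: "(\<Sum>k\<in>A. (f k :: 'a \<Rightarrow> 'b::comm_monoid_add)) x = (\<Sum>k\<in>A. f k x)"
  by (induction A rule: infinite_finite_induct) auto

lemma nc_mult_assoc: "nc_mult (nc_mult f g) h = nc_mult f (nc_mult g h)"
proof
  fix w :: "nat list"
  let ?L = "length w"
  let ?G = "\<lambda>i j. f (take i w) * g (take j (drop i w)) * h (drop (i+j) w)"
  have "nc_mult (nc_mult f g) h w = (\<Sum>k\<le>?L. \<Sum>i\<le>k. ?G i (k - i))"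
  proof -
    have "nc_mult (nc_mult f g) h w = (\<Sum>k\<le>?L. \<Sum>i\<le>length (take k w). f (take i (take k w)) * g (drop i (take k w)) * h (drop k w))"
      unfolding nc_mult_def sum_distrib_right by simp
    also have "\<dots> = (\<Sum>k\<le>?L. \<Sum>i\<le>k. ?G i (k - i))"
    proof (rule sum.cong[OF refl])
      fix k assume k: "k \<in> {..?L}"
      then have "length (take k w) = k" by auto
      moreover have "f (take i (take k w)) * g (drop i (take k w)) * h (drop k w) = ?G i (k - i)" if "i \<le> k" for i
        using that k by (simp add: take_drop min_def)
      ultimately show "(\<Sum>i\<le>length (take k w). f (take i (take k w)) * g (drop i (take k w)) * h (drop k w)) = (\<Sum>i\<le>k. ?G i (k - i))"
        by (auto intro!: sum.cong)
    qed
    finally show ?thesis .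
  qed
  also have "\<dots> = (\<Sum>(i,j)\<in>{(i,j). i+j \<le> ?L}. ?G i j)"
    by (rule sum.triangle_reindex_eq[symmetric])
  also have "\<dots> = (\<Sum>i\<le>?L. \<Sum>j\<le>?L - i. ?G i j)"
  proof -
    have "{(i,j). i+j \<le> ?L} = Sigma {..?L} (\<lambda>i. {..?L - i})" by auto
    then show ?thesis by (simp add: sum.Sigma)
  qed
  also have "\<dots> = nc_mult f (nc_mult g h) w"
    unfolding nc_mult_def sum_distrib_left
    by (intro sum.cong refl) (simp_all add: mult.assoc add.commute)
  finally show "nc_mult (nc_mult f g) h w = nc_mult f (nc_mult g h) w" .
qed

lemma sum_single:
  assumes "finite A" "a \<in> A" "\<And>i. i \<in> A \<Longrightarrow> i \<noteq> a \<Longrightarrow> F i = 0"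
  shows "sum F A = F a"
proof -
  have "sum F A = F a + sum F (A - {a})" using assms by (simp add: sum.remove)
  also have "sum F (A - {a}) = 0" using assms by (intro sum.neutral) auto
  finally show ?thesis by simp
qed

lemma nc_mult_add_left: "nc_mult (f + g) h = nc_mult f h + nc_mult g h"
  by (simp add: nc_mult_def fun_eq_iff algebra_simps sum.distrib)
lemma nc_mult_add_right: "nc_mult h (f + g) = nc_mult h f + nc_mult h g"
  by (simp add: nc_mult_def fun_eq_iff algebra_simps sum.distrib)
lemma nc_mult_diff_left: "nc_mult (f - g) h = nc_mult f h - nc_mult g h"
  by (simp add: nc_mult_def fun_eq_iff algebra_simps sum_subtractf)
lemma nc_mult_diff_right: "nc_mult h (f - g) = nc_mult h f - nc_mult h g"
  by (simp add: nc_mult_def fun_eq_iff algebra_simps sum_subtractf)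
lemma nc_mult_zero_left[simp]: "nc_mult 0 h = 0"
  by (simp add: nc_mult_def fun_eq_iff)
lemma nc_mult_zero_right[simp]: "nc_mult h 0 = 0"
  by (simp add: nc_mult_def fun_eq_iff)
lemma nc_mult_sum_left: "nc_mult (\<Sum>k\<in>A. f k) h = (\<Sum>k\<in>A. nc_mult (f k) h)"
  by (induction A rule: infinite_finite_induct) (simp_all only: sum.infinite sum.empty sum.insert not_False_eq_True nc_mult_add_left nc_mult_zero_left)
lemma nc_mult_sum_right: "nc_mult h (\<Sum>k\<in>A. f k) = (\<Sum>k\<in>A. nc_mult h (f k))"
  by (induction A rule: infinite_finite_induct) (simp_all only: sum.infinite sum.empty sum.insert not_False_eq_True nc_mult_add_right nc_mult_zero_right)

lemma nc_mult_Nil: "nc_mult f g [] = f [] * g []"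
  by (simp add: nc_mult_def)

lemma nc_mult_const_left: "nc_mult (nc_const c) g = (\<lambda>w. c * g w)"
proof
  fix w :: "nat list"
  have "nc_mult (nc_const c) g w = (\<Sum>i\<le>length w. nc_const c (take i w) * g (drop i w))"
    by (simp add: nc_mult_def)
  also have "\<dots> = nc_const c (take 0 w) * g (drop 0 w)"
    by (rule sum_single) (auto simp: nc_const_def)
  finally show "nc_mult (nc_const c) g w = c * g w" by (simp add: nc_const_def)
qed

lemma nc_mult_const_right: "nc_mult g (nc_const c) = (\<lambda>w. g w * c)"
proof
  fix w :: "nat list"
  have "nc_mult g (nc_const c) w = (\<Sum>i\<le>length w. g (take i w) * nc_const c (drop i w))"
    by (simp add: nc_mult_def)
  also have "\<dots> = g (take (length w) w) * nc_const c (drop (length w) w)"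
    by (rule sum_single) (auto simp: nc_const_def)
  finally show "nc_mult g (nc_const c) w = g w * c" by (simp add: nc_const_def)
qed

definition supp_le :: "ncpoly \<Rightarrow> nat \<Rightarrow> bool" where
  "supp_le f p \<longleftrightarrow> (\<forall>w. f w \<noteq> 0 \<longrightarrow> length w \<le> p)"

lemma nc_mult_high:
  assumes "supp_le f p" "supp_le g q" "p + q < length w"
  shows "nc_mult f g w = 0"
  unfolding nc_mult_def
proof (rule sum.neutral, rule ballI)
  fix i assume i: "i \<in> {..length w}"
  show "f (take i w) * g (drop i w) = 0"
  proof (cases "i \<le> p")
    case True
    then have "length (drop i w) > q" using assms(3) by auto
    then have "g (drop i w) = 0" using assms(2) unfolding supp_le_def by force
    then show ?thesis by simp
  next
    case False
    then have "length (take i w) > p" using i by auto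
    then have "f (take i w) = 0" using assms(1) unfolding supp_le_def by force
    then show ?thesis by simp
  qed
qed

lemma nc_mult_top:
  assumes "supp_le f p" "supp_le g q" "length w = p + q"
  shows "nc_mult f g w = f (take p w) * g (drop p w)"
  unfolding nc_mult_def
proof (rule sum_single)
  fix i assume i: "i \<in> {..length w}" and ip: "i \<noteq> p"
  show "f (take i w) * g (drop i w) = 0"
  proof (cases "i < p")
    case True
    then have "length (drop i w) > q" using assms(3) by auto
    then have "g (drop i w) = 0" using assms(2) unfolding supp_le_def by force
    then show ?thesis by simp
  next
    case False
    then have "length (take i w) > p" using i ip by auto
    then have "f (take i w) = 0" using assms(1) unfolding supp_le_def by force
    then show ?thesis by simp
  qed
qed (use assms in auto)


lemma poly_setI: "finite {w. f w \<noteq> 0} \<Longrightarrow> (\<And>w. f w \<noteq> 0 \<Longrightarrow> set w \<subseteq> {..<n}) \<Longrightarrow> f \<in> nc_poly_set n"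
  by (auto simp: nc_poly_set_def)
lemma poly_set_fin: "f \<in> nc_poly_set n \<Longrightarrow> finite {w. f w \<noteq> 0}"
  by (auto simp: nc_poly_set_def)
lemma poly_set_let: "f \<in> nc_poly_set n \<Longrightarrow> f w \<noteq> 0 \<Longrightarrow> set w \<subseteq> {..<n}"
  by (auto simp: nc_poly_set_def)

lemma poly_zero[simp]: "0 \<in> nc_poly_set n"
  by (auto simp: nc_poly_set_def)

lemma poly_add: assumes "f \<in> nc_poly_set n" "g \<in> nc_poly_set n" shows "f + g \<in> nc_poly_set n"
proof (rule poly_setI)
  have "{w. (f + g) w \<noteq> 0} \<subseteq> {w. f w \<noteq> 0} \<union> {w. g w \<noteq> 0}" by auto
  then show "finite {w. (f + g) w \<noteq> 0}" using assms poly_set_fin finite_subset by blast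
  fix w assume "(f + g) w \<noteq> 0"
  then have "f w \<noteq> 0 \<or> g w \<noteq> 0" by auto
  then show "set w \<subseteq> {..<n}" using assms poly_set_let by blast
qed

lemma poly_uminus: assumes "f \<in> nc_poly_set n" shows "- f \<in> nc_poly_set n"
  using assms by (auto simp: nc_poly_set_def)

lemma poly_diff: assumes "f \<in> nc_poly_set n" "g \<in> nc_poly_set n" shows "f - g \<in> nc_poly_set n"
  using poly_add[OF assms(1) poly_uminus[OF assms(2)]] by simp

lemma poly_sum: "(\<And>k. k \<in> A \<Longrightarrow> f k \<in> nc_poly_set n) \<Longrightarrow> (\<Sum>k\<in>A. f k) \<in> nc_poly_set n"
  by (induction A rule: infinite_finite_induct) (auto intro: poly_add)

lemma poly_mult: assumes f: "f \<in> nc_poly_set n" and g: "g \<in> nc_poly_set n" shows "nc_mult f g \<in> nc_poly_set n"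
proof (rule poly_setI)
  have sub: "{w. nc_mult f g w \<noteq> 0} \<subseteq> (\<lambda>(u,v). u @ v) ` ({w. f w \<noteq> 0} \<times> {w. g w \<noteq> 0})"
  proof
    fix w assume "w \<in> {w. nc_mult f g w \<noteq> 0}"
    then obtain i where "f (take i w) * g (drop i w) \<noteq> 0" unfolding nc_mult_def
      by (metis (mono_tags, lifting) mem_Collect_eq sum.neutral)
    then have "(take i w, drop i w) \<in> {w. f w \<noteq> 0} \<times> {w. g w \<noteq> 0}" by auto
    then show "w \<in> (\<lambda>(u,v). u @ v) ` ({w. f w \<noteq> 0} \<times> {w. g w \<noteq> 0})"
      by (metis (no_types, lifting) append_take_drop_id case_prod_conv image_eqI)
  qed
  show "finite {w. nc_mult f g w \<noteq> 0}"
    by (rule finite_subset[OF sub]) (use f g poly_set_fin in auto)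
  fix w assume "nc_mult f g w \<noteq> 0"
  then obtain i where "f (take i w) * g (drop i w) \<noteq> 0" unfolding nc_mult_def
    by (metis (mono_tags, lifting) sum.neutral)
  then have "set (take i w) \<subseteq> {..<n}" "set (drop i w) \<subseteq> {..<n}"
    using f g poly_set_let by auto
  then show "set w \<subseteq> {..<n}"
    by (metis append_take_drop_id le_sup_iff set_append)
qed

lemma poly_const[simp]: "nc_const c \<in> nc_poly_set n"
proof (rule poly_setI)
  show "finite {w. nc_const c w \<noteq> 0}"
    by (rule finite_subset[of _ "{[]}"]) (auto simp: nc_const_def)
qed (auto simp: nc_const_def split: if_splits)

lemma poly_var: "l < n \<Longrightarrow> nc_var l \<in> nc_poly_set n"
proof (rule poly_setI)
  show "finite {w. nc_var l w \<noteq> 0}"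
    by (rule finite_subset[of _ "{[l]}"]) (auto simp: nc_var_def)
qed (auto simp: nc_var_def split: if_splits)

lemma poly_smult: "f \<in> nc_poly_set n \<Longrightarrow> nc_smult c f \<in> nc_poly_set n"
  by (rule poly_setI) (auto simp: nc_smult_def intro: finite_subset[OF _ poly_set_fin] dest: poly_set_let)

definition lin :: "ncpoly \<Rightarrow> ncpoly" where
  "lin f = (\<lambda>w. if w = [] then 0 else f w)"

lemma poly_lin: "f \<in> nc_poly_set n \<Longrightarrow> lin f \<in> nc_poly_set n"
  by (rule poly_setI) (auto simp: lin_def intro: finite_subset[OF _ poly_set_fin] dest: poly_set_let split: if_splits)

lemma lin_sum: "lin (\<Sum>k\<in>A. f k) = (\<Sum>k\<in>A. lin (f k))"
  by (rule ext) (simp add: lin_def sum_fun_apply)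

lemma lin_const_left: "lin (nc_mult (nc_const c) g) = nc_mult (nc_const c) (lin g)"
  by (simp add: lin_def nc_mult_const_left fun_eq_iff)

lemma lin_const_right: "lin (nc_mult g (nc_const c)) = nc_mult (lin g) (nc_const c)"
  by (simp add: lin_def nc_mult_const_right fun_eq_iff)


definition sdeg :: "nat list set \<Rightarrow> nat" where
  "sdeg S = Max (insert 0 (length ` S))"

lemma sdeg_ge: "finite S \<Longrightarrow> w \<in> S \<Longrightarrow> length w \<le> sdeg S"
  unfolding sdeg_def by (intro Max_ge) auto

lemma sdeg_attained: assumes "finite S" "S \<noteq> {}" shows "\<exists>w\<in>S. length w = sdeg S"
proof -
  have "sdeg S \<in> insert 0 (length ` S)" unfolding sdeg_def using assms by (intro Max_in) auto
  moreover obtain w0 where w0: "w0 \<in> S" using assms by auto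
  moreover have "length w0 \<le> sdeg S" using sdeg_ge[OF assms(1) w0] .
  ultimately show ?thesis by (metis image_iff insert_iff le_zero_eq)
qed

lemma sdeg_less: assumes "finite S" "S \<noteq> {}" "\<forall>w\<in>S. length w < g" shows "sdeg S < g"
  using sdeg_attained[OF assms(1,2)] assms(3) by metis

definition csupp :: "nat \<Rightarrow> ncmat \<Rightarrow> nat \<Rightarrow> nat list set" where
  "csupp N C k = {w. \<exists>i<N. C i k w \<noteq> 0}"

definition cdeg :: "nat \<Rightarrow> ncmat \<Rightarrow> nat \<Rightarrow> nat" where
  "cdeg N C k = sdeg (csupp N C k)"

definition tr :: "ncmat \<Rightarrow> ncmat" where
  "tr D = (\<lambda>a b. D b a)"

lemma csupp_fin: assumes "\<forall>i<N. C i k \<in> nc_poly_set n" shows "finite (csupp N C k)"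
proof -
  have "csupp N C k = (\<Union>i<N. {w. C i k w \<noteq> 0})" unfolding csupp_def by auto
  then show ?thesis using assms poly_set_fin by auto
qed

lemma cdeg_supp: assumes "finite (csupp N C k)" "i < N" shows "supp_le (C i k) (cdeg N C k)"
  unfolding supp_le_def cdeg_def using assms by (auto intro!: sdeg_ge simp: csupp_def)

lemma csupp_empty: "csupp N C k = {} \<Longrightarrow> i < N \<Longrightarrow> C i k = 0"
  unfolding csupp_def by auto

lemma supp0_const: "supp_le f 0 \<Longrightarrow> f = nc_const (f [])"
  unfolding supp_le_def nc_const_def by (auto simp: fun_eq_iff)

lemma lin_zero[simp]: "lin 0 = 0"
  by (simp add: lin_def fun_eq_iff)

definition mu :: "nat \<Rightarrow> nat \<Rightarrow> ncmat \<Rightarrow> nat" where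
  "mu N r C = (\<Sum>k<r. if csupp N C k = {} then 0 else Suc (cdeg N C k))"

lemma reduce:
  fixes M :: ncmat
  assumes M1: "\<forall>i<N. \<forall>x<N. supp_le (M i x) 1"
  shows "C \<in> nc_mat_set n N r \<Longrightarrow> D \<in> nc_mat_set n r N \<Longrightarrow>
    (\<forall>i<N. \<forall>x<N. M i x = nc_mat_mult r C D i x) \<Longrightarrow>
    \<exists>U V. U \<in> nc_mat_set n N r \<and> V \<in> nc_mat_set n r N \<and>
      (\<forall>i<N. \<forall>x<N. lin (M i x) = nc_mat_mult r U V i x)"
proof (induction "mu N r C" arbitrary: C D rule: less_induct)
  case less
  note Cm = less.prems(1) and Dm = less.prems(2) and eqM = less.prems(3)
  have Cp: "k < r \<Longrightarrow> i < N \<Longrightarrow> C i k \<in> nc_poly_set n" for i k using Cm by (auto simp: nc_mat_set_def)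
  have Dp: "k < r \<Longrightarrow> x < N \<Longrightarrow> D k x \<in> nc_poly_set n" for x k using Dm by (auto simp: nc_mat_set_def)
  have finC: "k < r \<Longrightarrow> finite (csupp N C k)" for k using Cp csupp_fin by blast
  have finD: "k < r \<Longrightarrow> finite (csupp N (tr D) k)" for k using Dp csupp_fin[of N "tr D" k n] by (auto simp: tr_def)
  have Cs: "k < r \<Longrightarrow> i < N \<Longrightarrow> supp_le (C i k) (cdeg N C k)" for i k using finC cdeg_supp by blast
  have Ds: "k < r \<Longrightarrow> x < N \<Longrightarrow> supp_le (D k x) (cdeg N (tr D) k)" for x k
    using finD cdeg_supp[of N "tr D" k x] by (auto simp: tr_def)
  have Cz: "csupp N C k = {} \<Longrightarrow> i < N \<Longrightarrow> C i k = 0" for i k using csupp_empty by blast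
  have Dz: "csupp N (tr D) k = {} \<Longrightarrow> x < N \<Longrightarrow> D k x = 0" for x k using csupp_empty[of N "tr D" k x] by (auto simp: tr_def)
  show ?case
  proof (cases "\<exists>k<r. csupp N C k \<noteq> {} \<and> csupp N (tr D) k \<noteq> {} \<and> cdeg N C k \<ge> 1 \<and> cdeg N (tr D) k \<ge> 1")
    case False
    define U where "U = (\<lambda>i k. if csupp N C k = {} \<or> cdeg N C k = 0 then C i k else lin (C i k))"
    define V where "V = (\<lambda>k x. if csupp N C k = {} \<or> cdeg N C k = 0 then lin (D k x) else D k x)"
    have "U \<in> nc_mat_set n N r" unfolding U_def nc_mat_set_def using Cp poly_lin by auto
    moreover have "V \<in> nc_mat_set n r N" unfolding V_def nc_mat_set_def using Dp poly_lin by auto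
    moreover have "lin (M i x) = nc_mat_mult r U V i x" if i: "i < N" and x: "x < N" for i x
    proof -
      have "lin (M i x) = (\<Sum>k<r. lin (nc_mult (C i k) (D k x)))"
        using eqM i x by (simp add: nc_mat_mult_def lin_sum)
      also have "\<dots> = (\<Sum>k<r. nc_mult (U i k) (V k x))"
      proof (rule sum.cong[OF refl])
        fix k assume "k \<in> {..<r}"
        then have k: "k < r" by simp
        show "lin (nc_mult (C i k) (D k x)) = nc_mult (U i k) (V k x)"
        proof (cases "csupp N C k = {}")
          case True
          then show ?thesis using Cz[OF True i] by (simp add: U_def V_def)
        next
          case cnz: False
          show ?thesis
          proof (cases "cdeg N C k = 0")
            case True
            then obtain c where "C i k = nc_const c" using Cs[OF k i] supp0_const by metis
            then show ?thesis using True cnz unfolding U_def V_def by (simp add: lin_const_left)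
          next
            case g: False
            have "\<not> (csupp N C k \<noteq> {} \<and> csupp N (tr D) k \<noteq> {} \<and> cdeg N C k \<ge> 1 \<and> cdeg N (tr D) k \<ge> 1)"
              using False k by blast
            then have "csupp N (tr D) k = {} \<or> cdeg N (tr D) k = 0" using cnz g by auto
            then show ?thesis
            proof
              assume "csupp N (tr D) k = {}"
              then show ?thesis using Dz x g cnz by (simp add: U_def V_def)
            next
              assume "cdeg N (tr D) k = 0"
              then obtain c where "D k x = nc_const c" using Ds[OF k x] supp0_const by metis
              then show ?thesis using g cnz unfolding U_def V_def by (simp add: lin_const_right)
            qed
          qed
        qed
      qed
      finally show ?thesis by (simp add: nc_mat_mult_def)
    qed
    ultimately show ?thesis by blast
  next
    case True
    then obtain k0 where k0: "k0 < r" "csupp N C k0 \<noteq> {}" "csupp N (tr D) k0 \<noteq> {}"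
      "cdeg N C k0 \<ge> 1" "cdeg N (tr D) k0 \<ge> 1" by blast
    define g where "g = (\<lambda>k. cdeg N C k)"
    define d where "d = (\<lambda>k. cdeg N (tr D) k)"
    define P where "P = {k. k < r \<and> csupp N C k \<noteq> {} \<and> csupp N (tr D) k \<noteq> {}}"
    define m where "m = Max ((\<lambda>k. g k + d k) ` P)"
    define T where "T = {k \<in> P. g k + d k = m}"
    have finP: "finite P" unfolding P_def by auto
    have k0P: "k0 \<in> P" using k0 unfolding P_def by auto
    have smax: "k \<in> P \<Longrightarrow> g k + d k \<le> m" for k unfolding m_def using finP by (intro Max_ge) auto
    have m2: "m \<ge> 2" using smax[OF k0P] k0 unfolding g_def d_def by auto
    have "m \<in> (\<lambda>k. g k + d k) ` P" unfolding m_def using finP k0P by (intro Max_in) auto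
    then have Tne: "T \<noteq> {}" unfolding T_def by auto
    have finT: "finite T" using finP unfolding T_def by auto
    obtain j where jT: "j \<in> T" and jmax: "\<And>k. k \<in> T \<Longrightarrow> g k \<le> g j"
    proof -
      have "Max (g ` T) \<in> g ` T" using finT Tne by (intro Max_in) auto
      then obtain j where "j \<in> T" "g j = Max (g ` T)" by auto
      moreover have "k \<in> T \<Longrightarrow> g k \<le> Max (g ` T)" for k using finT by (intro Max_ge) auto
      ultimately show ?thesis using that by metis
    qed
    have jr: "j < r" and jC: "csupp N C j \<noteq> {}" and jD: "csupp N (tr D) j \<noteq> {}" and jm: "g j + d j = m"
      using jT unfolding T_def P_def by auto
    obtain u where "u \<in> csupp N (tr D) j" and ulen: "length u = d j"
      using sdeg_attained[OF finD[OF jr] jD] unfolding d_def cdeg_def by blast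
    then obtain jj where jj: "jj < N" and uD: "D j jj u \<noteq> 0" unfolding csupp_def tr_def by auto
    define e where "e = (\<lambda>k w. if k \<in> T \<and> k \<noteq> j \<and> length w + g k = g j then - D k jj (w @ u) / D j jj u else 0)"
    have ej: "e j = 0" unfolding e_def by (simp add: fun_eq_iff)
    have e_out: "\<not> (k \<in> T \<and> k \<noteq> j) \<Longrightarrow> e k = 0" for k unfolding e_def by (auto simp: fun_eq_iff)
    have e_supp: "supp_le (e k) (g j - g k)" for k
      unfolding supp_le_def e_def by auto
    have e_poly: "k < r \<Longrightarrow> e k \<in> nc_poly_set n" for k
    proof (rule poly_setI)
      assume k: "k < r"
      have "{w. e k w \<noteq> 0} \<subseteq> (\<lambda>w. w @ u) -` {v. D k jj v \<noteq> 0}" unfolding e_def by auto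
      moreover have "finite ((\<lambda>w. w @ u) -` {v. D k jj v \<noteq> 0})"
        by (rule finite_vimageI) (use poly_set_fin[OF Dp[OF k jj]] in \<open>auto simp: inj_def\<close>)
      ultimately show "finite {w. e k w \<noteq> 0}" using finite_subset by blast
      fix w assume "e k w \<noteq> 0"
      then have "D k jj (w @ u) \<noteq> 0" unfolding e_def by (auto split: if_splits)
      then have "set (w @ u) \<subseteq> {..<n}" using poly_set_let[OF Dp[OF k jj]] by blast
      then show "set w \<subseteq> {..<n}" by auto
    qed
    define S where "S = (\<lambda>i. \<Sum>k<r. nc_mult (C i k) (e k))"
    define C' where "C' = (\<lambda>i l. if l = j then C i j - S i else C i l)"
    define D' where "D' = (\<lambda>l x. D l x + nc_mult (e l) (D j x))"
    have C'm: "C' \<in> nc_mat_set n N r"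
      unfolding nc_mat_set_def C'_def S_def
      using Cp e_poly jr by (auto intro!: poly_diff poly_sum poly_mult)
    have D'm: "D' \<in> nc_mat_set n r N"
      unfolding nc_mat_set_def D'_def
      using Dp e_poly jr by (auto intro!: poly_add poly_mult)
    have eq': "\<forall>i<N. \<forall>x<N. M i x = nc_mat_mult r C' D' i x"
    proof (intro allI impI)
      fix i x assume i: "i < N" and x: "x < N"
      have tm: "nc_mult (C' i l) (D' l x) = nc_mult (C i l) (D l x) + nc_mult (nc_mult (C i l) (e l)) (D j x)
          - (if l = j then nc_mult (S i) (D j x) else 0)" for l
      proof (cases "l = j")
        case True
        then show ?thesis unfolding C'_def D'_def by (simp add: ej nc_mult_diff_left)
      next
        case False
        then show ?thesis unfolding C'_def D'_def by (simp add: nc_mult_add_right nc_mult_assoc)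
      qed
      have "nc_mat_mult r C' D' i x = (\<Sum>l<r. nc_mult (C i l) (D l x)) + (\<Sum>l<r. nc_mult (nc_mult (C i l) (e l)) (D j x))
          - (\<Sum>l<r. if l = j then nc_mult (S i) (D j x) else 0)"
        unfolding nc_mat_mult_def tm by (simp add: sum.distrib sum_subtractf)
      also have "(\<Sum>l<r. nc_mult (nc_mult (C i l) (e l)) (D j x)) = nc_mult (S i) (D j x)"
        unfolding S_def by (simp add: nc_mult_sum_left)
      also have "(\<Sum>l<r. if l = j then nc_mult (S i) (D j x) else 0) = nc_mult (S i) (D j x)"
        using jr by simp
      finally show "M i x = nc_mat_mult r C' D' i x" using eqM i x by (simp add: nc_mat_mult_def)
    qed
    have key: "C' i j w = 0" if i: "i < N" and w: "length w \<ge> g j" for i w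
    proof -
      have TP: "k \<in> T \<Longrightarrow> k \<in> P" for k unfolding T_def by auto
      have Pr: "k \<in> P \<Longrightarrow> k < r" for k unfolding P_def by auto
      have Sw: "S i w = (\<Sum>k<r. nc_mult (C i k) (e k) w)" unfolding S_def by (simp add: sum_fun_apply)
      have C'w: "C' i j w = C i j w - S i w" unfolding C'_def by simp
      show ?thesis
      proof (cases "length w > g j")
        case True
        have "C i j w = 0" using Cs[OF jr i] True unfolding supp_le_def g_def by force
        moreover have "nc_mult (C i k) (e k) w = 0" if k: "k < r" for k
        proof (cases "k \<in> T \<and> k \<noteq> j")
          case True
          then have "g k \<le> g j" using jmax by auto
          then show ?thesis using nc_mult_high[OF Cs[OF k i] e_supp[of k]] \<open>length w > g j\<close>
            unfolding g_def by auto
        next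
          case False
          then show ?thesis using e_out by simp
        qed
        ultimately show ?thesis using C'w Sw by simp
      next
        case False
        then have wl: "length w = g j" using w by simp
        let ?X = "\<lambda>k. C i k (take (g k) w) * D k jj (drop (g k) w @ u)"
        have "M i jj (w @ u) = 0"
          using M1 i jj wl ulen jm m2 unfolding supp_le_def by force
        then have rel: "(\<Sum>k<r. nc_mult (C i k) (D k jj) (w @ u)) = 0"
          using eqM i jj by (simp add: nc_mat_mult_def sum_fun_apply)
        have X: "nc_mult (C i k) (D k jj) (w @ u) = (if k \<in> T then ?X k else 0)" if k: "k < r" for k
        proof (cases "k \<in> T")
          case True
          then have gk: "g k \<le> g j" "g k + d k = m" using jmax unfolding T_def by auto
          have "nc_mult (C i k) (D k jj) (w @ u) = C i k (take (g k) (w @ u)) * D k jj (drop (g k) (w @ u))"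
            using nc_mult_top[OF Cs[OF k i] Ds[OF k jj]] gk wl ulen jm unfolding g_def d_def by auto
          then show ?thesis using True gk wl by simp
        next
          case False
          show ?thesis
          proof (cases "k \<in> P")
            case True
            then have "g k + d k < m" using smax False unfolding T_def by fastforce
            then show ?thesis using nc_mult_high[OF Cs[OF k i] Ds[OF k jj]] False wl ulen jm
              unfolding g_def d_def by auto
          next
            case False
            then have "csupp N C k = {} \<or> csupp N (tr D) k = {}" using k unfolding P_def by auto
            then show ?thesis using Cz[OF _ i] Dz[OF _ jj] \<open>k \<notin> T\<close> TP by auto
          qed
        qed
        have Y: "nc_mult (C i k) (e k) w = (if k \<in> T \<and> k \<noteq> j then ?X k * (- 1 / D j jj u) else 0)" if k: "k < r" for k
        proof (cases "k \<in> T \<and> k \<noteq> j")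
          case True
          then have gk: "g k \<le> g j" using jmax by auto
          have "nc_mult (C i k) (e k) w = C i k (take (g k) w) * e k (drop (g k) w)"
            using nc_mult_top[OF Cs[OF k i] e_supp[of k]] gk wl unfolding g_def by auto
          then show ?thesis using True gk wl unfolding e_def by simp
        next
          case False
          show ?thesis by (subst if_not_P[OF False]) (simp add: e_out[OF False])
        qed
        have Xj: "?X j = C i j w * D j jj u" using wl by simp
        have "(\<Sum>k<r. nc_mult (C i k) (D k jj) (w @ u)) = (\<Sum>k<r. (if k = j then ?X k else 0) + (if k \<in> T \<and> k \<noteq> j then ?X k else 0))"
          using X jT by (intro sum.cong) auto
        also have "\<dots> = ?X j + (\<Sum>k<r. if k \<in> T \<and> k \<noteq> j then ?X k else 0)"
          using jr by (simp add: sum.distrib)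
        finally have r1: "C i j w * D j jj u + (\<Sum>k<r. if k \<in> T \<and> k \<noteq> j then ?X k else 0) = 0"
          using rel Xj by simp
        have "S i w = (\<Sum>k<r. (if k \<in> T \<and> k \<noteq> j then ?X k else 0) * (- 1 / D j jj u))"
          unfolding Sw using Y by (intro sum.cong) auto
        also have "\<dots> = (\<Sum>k<r. if k \<in> T \<and> k \<noteq> j then ?X k else 0) * (- 1 / D j jj u)"
          by (rule sum_distrib_right[symmetric])
        also have "\<dots> = C i j w"
        proof -
          have h: "(\<Sum>k<r. if k \<in> T \<and> k \<noteq> j then ?X k else 0) = - (C i j w * D j jj u)"
            using r1 by (simp add: eq_neg_iff_add_eq_0 add.commute)
          show ?thesis unfolding h using uD by (simp add: field_simps)
        qed
        finally show ?thesis using C'w by simp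
      qed
    qed
    have mu_less: "mu N r C' < mu N r C"
      unfolding mu_def
    proof (rule sum_strict_mono_ex1)
      have same: "k \<noteq> j \<Longrightarrow> csupp N C' k = csupp N C k" for k
        unfolding csupp_def C'_def by auto
      have jless: "(if csupp N C' j = {} then 0 else Suc (cdeg N C' j)) < (if csupp N C j = {} then 0 else Suc (cdeg N C j))"
      proof (cases "csupp N C' j = {}")
        case True
        then show ?thesis using jC by simp
      next
        case False
        have fin: "finite (csupp N C' j)"
          using C'm jr by (intro csupp_fin[of N C' j n]) (auto simp: nc_mat_set_def)
        have "\<forall>w\<in>csupp N C' j. length w < g j"
        proof
          fix w assume "w \<in> csupp N C' j"
          then obtain i where "i < N" "C' i j w \<noteq> 0" unfolding csupp_def by auto
          then show "length w < g j" using key by (meson not_le)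
        qed
        then have "cdeg N C' j < g j" unfolding cdeg_def using sdeg_less[OF fin False] by blast
        then show ?thesis using False jC unfolding g_def by simp
      qed
      show "\<forall>k\<in>{..<r}. (if csupp N C' k = {} then 0 else Suc (cdeg N C' k)) \<le> (if csupp N C k = {} then 0 else Suc (cdeg N C k))"
      proof
        fix k assume "k \<in> {..<r}"
        show "(if csupp N C' k = {} then 0 else Suc (cdeg N C' k)) \<le> (if csupp N C k = {} then 0 else Suc (cdeg N C k))"
        proof (cases "k = j")
          case True
          then show ?thesis using jless by (simp only: less_imp_le)
        next
          case False
          then show ?thesis using same[OF False] unfolding cdeg_def by simp
        qed
      qed
      show "\<exists>k\<in>{..<r}. (if csupp N C' k = {} then 0 else Suc (cdeg N C' k)) < (if csupp N C k = {} then 0 else Suc (cdeg N C k))"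
        using jless jr by blast
    qed simp
    show ?thesis using less.hyps[OF mu_less C'm D'm eq'] by blast
  qed
qed


lemma eig_lemma:
  fixes b0 :: "complex mat"
  assumes b0: "b0 \<in> carrier_mat N N" and r: "r < N"
    and eq: "\<forall>i<N. \<forall>x<N. b0 $$ (i,x) - (if i = x then z else 0) = (\<Sum>k<r. c i k * d k x)"
  shows "eigenvalue b0 z"
proof -
  define Cm where "Cm = mat N N (\<lambda>(i,k). if k < r then c i k else 0)"
  define Dm where "Dm = mat N N (\<lambda>(k,x). if k < r then d k x else (0::complex))"
  have CmC: "Cm \<in> carrier_mat N N" and DmC: "Dm \<in> carrier_mat N N" unfolding Cm_def Dm_def by auto
  have ch: "char_matrix b0 z = Cm * Dm"
  proof (rule eq_matI)
    fix i x assume i: "i < dim_row (Cm * Dm)" and x: "x < dim_col (Cm * Dm)"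
    then have iN: "i < N" and xN: "x < N" using CmC DmC by auto
    have "(Cm * Dm) $$ (i,x) = (\<Sum>k<N. Cm $$ (i,k) * Dm $$ (k,x))"
      using iN xN CmC DmC by (simp add: scalar_prod_def atLeast0LessThan)
    also have "\<dots> = (\<Sum>k<N. if k < r then c i k * d k x else 0)"
      using iN xN by (intro sum.cong) (auto simp: Cm_def Dm_def)
    also have "\<dots> = (\<Sum>k<r. c i k * d k x)"
    proof -
      have "{..<r} \<subseteq> {..<N}" using r by auto
      then show ?thesis by (subst sum.mono_neutral_cong_right[of "{..<N}" "{..<r}"]) auto
    qed
    finally show "char_matrix b0 z $$ (i, x) = (Cm * Dm) $$ (i, x)"
      using eq[rule_format, OF iN xN] iN xN b0 by (auto simp: char_matrix_def split: if_splits)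
  qed (use b0 CmC DmC in \<open>auto simp: char_matrix_def\<close>)
  have "det Cm = 0"
  proof -
    define v where "v = (unit_vec N (N - 1) :: complex vec)"
    have "v \<in> carrier_vec N" unfolding v_def by simp
    moreover have "v \<noteq> 0\<^sub>v N"
    proof
      assume "v = 0\<^sub>v N"
      then have "v $ (N - 1) = 0\<^sub>v N $ (N - 1)" by simp
      then show False using r by (simp add: v_def)
    qed
    moreover have "Cm *\<^sub>v v = 0\<^sub>v N"
    proof (rule eq_vecI)
      fix i assume "i < dim_vec (0\<^sub>v N :: complex vec)"
      then have i: "i < N" by simp
      have "(Cm *\<^sub>v v) $ i = Cm $$ (i, N - 1)"
        using i CmC r by (simp add: v_def)
      also have "\<dots> = 0" using i r by (simp add: Cm_def)
      finally show "(Cm *\<^sub>v v) $ i = 0\<^sub>v N $ i" using i by simp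
    qed (use CmC in \<open>auto simp: v_def\<close>)
    ultimately show ?thesis using det_0_iff_vec_prod_zero[OF CmC] by blast
  qed
  then have "det (char_matrix b0 z) = 0" using ch det_mult[OF CmC DmC] by simp
  then show ?thesis using eigenvalue_det[OF b0] by simp
qed


lemma factor_not_full:
  assumes "r < N" "C \<in> nc_mat_set n N r" "D \<in> nc_mat_set n r N"
    "\<forall>i<N. \<forall>j<N. A i j = nc_mat_mult r C D i j"
  shows "\<not> nc_full n N N A"
proof -
  have "nc_inner_rank n N N A \<le> r" unfolding nc_inner_rank_def
    by (rule Least_le) (use assms in blast)
  then show ?thesis using assms(1) unfolding nc_full_def by simp
qed

lemma not_full_factor:
  assumes A: "A \<in> nc_mat_set n N N" and nf: "\<not> nc_full n N N A"
  shows "\<exists>r<N. \<exists>C D. C \<in> nc_mat_set n N r \<and> D \<in> nc_mat_set n r N \<and> (\<forall>i<N. \<forall>j<N. A i j = nc_mat_mult r C D i j)"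
proof -
  let ?P = "\<lambda>r. \<exists>C D. C \<in> nc_mat_set n N r \<and> D \<in> nc_mat_set n r N \<and> (\<forall>i<N. \<forall>j<N. A i j = nc_mat_mult r C D i j)"
  define I :: ncmat where "I = (\<lambda>l j. if l = j then nc_const 1 else 0)"
  have Im: "I \<in> nc_mat_set n N N" unfolding I_def nc_mat_set_def by auto
  have "A i j = nc_mat_mult N A I i j" if "i < N" "j < N" for i j
  proof -
    have "nc_mat_mult N A I i j = (\<Sum>l<N. if l = j then nc_mult (A i l) (nc_const 1) else 0)"
      unfolding nc_mat_mult_def I_def by (intro sum.cong) auto
    also have "\<dots> = nc_mult (A i j) (nc_const 1)" using that by simp
    also have "\<dots> = A i j" by (simp add: nc_mult_const_right)
    finally show ?thesis by simp
  qed
  then have PN: "?P N" using A Im by blast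
  have le: "nc_inner_rank n N N A \<le> N" unfolding nc_inner_rank_def by (rule Least_le) (rule PN)
  have P: "?P (nc_inner_rank n N N A)" unfolding nc_inner_rank_def by (rule LeastI) (rule PN)
  have "nc_inner_rank n N N A \<noteq> N" using nf unfolding nc_full_def by simp
  then show ?thesis using le P by (intro exI[of _ "nc_inner_rank n N N A"]) auto
qed

lemma pencil_apply: "nc_pencil n b0 b i j w = nc_const (b0 $$ (i, j)) w + (\<Sum>l<n. b l $$ (i, j) * nc_var l w)"
  unfolding nc_pencil_def by (simp add: sum_fun_apply nc_smult_def)

lemma hom_apply: "nc_hom_part n b i j w = (\<Sum>l<n. b l $$ (i, j) * nc_var l w)"
  unfolding nc_hom_part_def by (simp add: sum_fun_apply nc_smult_def)

theorem lemma4p4: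
  fixes n N :: nat and b0 :: "complex mat" and b :: "nat \<Rightarrow> complex mat"
  assumes "b0 \<in> carrier_mat N N"
    and "\<And>l. l < n \<Longrightarrow> b l \<in> carrier_mat N N"
  shows "nc_full_spectrum n N (nc_pencil n b0 b) \<subseteq> {z. eigenvalue b0 z}
    \<and> (nc_full n N N (nc_hom_part n b) \<longrightarrow> nc_full_spectrum n N (nc_pencil n b0 b) = {})"
proof -
  define Mz where "Mz = (\<lambda>z i j. nc_pencil n b0 b i j - (if i = j then nc_const z else 0))"
  have Mz_apply: "Mz z i j w = nc_const (b0 $$ (i, j)) w + (\<Sum>l<n. b l $$ (i, j) * nc_var l w)
     - (if i = j then nc_const z w else 0)" for z i j w
    unfolding Mz_def by (simp add: pencil_apply)
  have Mz_poly: "Mz z \<in> nc_mat_set n N N" for z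
    unfolding Mz_def nc_mat_set_def nc_pencil_def
    by (auto intro!: poly_diff poly_add poly_sum poly_smult poly_var)
  have Mz_supp: "supp_le (Mz z i j) 1" for z i j
    unfolding supp_le_def
  proof (intro allI impI)
    fix w assume "Mz z i j w \<noteq> 0"
    show "length w \<le> 1"
    proof (rule ccontr)
      assume "\<not> length w \<le> 1"
      then have "w \<noteq> []" "\<And>l. w \<noteq> [l]" by auto
      then have "Mz z i j w = 0" unfolding Mz_apply nc_const_def nc_var_def by simp
      then show False using \<open>Mz z i j w \<noteq> 0\<close> by simp
    qed
  qed
  have Mz_lin: "lin (Mz z i j) = nc_hom_part n b i j" for z i j
    unfolding lin_def by (rule ext) (simp add: Mz_apply hom_apply nc_const_def nc_var_def)
  have Mz_nil: "Mz z i j [] = b0 $$ (i, j) - (if i = j then z else 0)" for z i j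
    unfolding Mz_apply by (simp add: nc_const_def nc_var_def)
  have spec: "z \<in> nc_full_spectrum n N (nc_pencil n b0 b) \<longleftrightarrow> \<not> nc_full n N N (Mz z)" for z
    unfolding nc_full_spectrum_def Mz_def by simp
  have fac: "\<exists>r<N. \<exists>C D. C \<in> nc_mat_set n N r \<and> D \<in> nc_mat_set n r N \<and> (\<forall>i<N. \<forall>j<N. Mz z i j = nc_mat_mult r C D i j)"
    if "z \<in> nc_full_spectrum n N (nc_pencil n b0 b)" for z
    using not_full_factor[OF Mz_poly] that spec by blast
  have part1: "nc_full_spectrum n N (nc_pencil n b0 b) \<subseteq> {z. eigenvalue b0 z}"
  proof
    fix z assume "z \<in> nc_full_spectrum n N (nc_pencil n b0 b)"
    then obtain r C D where r: "r < N" and CD: "\<forall>i<N. \<forall>j<N. Mz z i j = nc_mat_mult r C D i j"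
      using fac by blast
    have "\<forall>i<N. \<forall>x<N. b0 $$ (i,x) - (if i = x then z else 0) = (\<Sum>k<r. C i k [] * D k x [])"
    proof (intro allI impI)
      fix i x assume "i < N" "x < N"
      then have "Mz z i x [] = nc_mat_mult r C D i x []" using CD by simp
      then show "b0 $$ (i,x) - (if i = x then z else 0) = (\<Sum>k<r. C i k [] * D k x [])"
        unfolding Mz_nil nc_mat_mult_def by (simp add: sum_fun_apply nc_mult_Nil)
    qed
    then have "eigenvalue b0 z"
      by (rule eig_lemma[OF assms(1) r, where c="\<lambda>i k. C i k []" and d="\<lambda>k x. D k x []"])
    then show "z \<in> {z. eigenvalue b0 z}" by simp
  qed
  have part2: "nc_full_spectrum n N (nc_pencil n b0 b) = {}" if full: "nc_full n N N (nc_hom_part n b)"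
  proof (rule ccontr)
    assume "nc_full_spectrum n N (nc_pencil n b0 b) \<noteq> {}"
    then obtain z where "z \<in> nc_full_spectrum n N (nc_pencil n b0 b)" by blast
    then obtain r C D where r: "r < N" and Cm: "C \<in> nc_mat_set n N r" and Dm: "D \<in> nc_mat_set n r N"
      and CD: "\<forall>i<N. \<forall>j<N. Mz z i j = nc_mat_mult r C D i j"
      using fac by blast
    obtain U V where U: "U \<in> nc_mat_set n N r" and V: "V \<in> nc_mat_set n r N"
      and UV: "\<forall>i<N. \<forall>x<N. lin (Mz z i x) = nc_mat_mult r U V i x"
      using reduce[of N "Mz z" C n r D] Mz_supp Cm Dm CD by blast
    have "\<forall>i<N. \<forall>x<N. nc_hom_part n b i x = nc_mat_mult r U V i x" using UV Mz_lin by simp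
    then show False using factor_not_full[OF r U V] full by blast
  qed
  show ?thesis using part1 part2 by blast
qed

end
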